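(* Let $H$ and $E$ be Hilbert spaces, let $T:H\to H$ be a bounded linear operator with $\ker T=\{0\}$, and let $\gamma:E\to H$ be a bounded linear operator with $\ker\gamma=\{0\}$ and $\mathcal{R}(T)\cap\mathcal{R}(\gamma)=\{0\}$. Define linear maps $A:\mathcal{D}(A)\to H$ and $\Gamma_0:\mathcal{D}(A)\to E$ on $\mathcal{D}(A)=\mathcal{R}(T)\dot+\mathcal{R}(\gamma)$ by $A(Tf+\gamma\varphi)=f$ and $\Gamma_0(Tf+\gamma\varphi)=\varphi$ for $f\in H$, $\varphi\in E$. If $\lambda\in\mathbb{C}$ is such that $I-\lambda T$ is boundedly invertible in $H$, then for every $f\in H$ and $\varphi\in E$ the problem of finding $u\in\mathcal{D}(A)$ with \[(A-\lambda I)u=f,\qquad \Gamma_0u=\varphi\] has a unique solution, namely \[u=T(I-\lambda T)^{-1}f+(I-\lambda T)^{-1}\gamma\varphi .\]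
   Context: $\mathcal{R}(\cdot)$ denotes the range of an operator and $\dot+$ a direct sum of linear subspaces; $A$ and $\Gamma_0$ are well defined by the stated injectivity and trivial-intersection assumptions. *)

theory Defs
  imports "HOL-Analysis.Analysis"
begin

class complex_vector = real_vector +
  fixes scaleC :: "complex \<Rightarrow> 'a \<Rightarrow> 'a" (infixr \<open>*\<^sub>C\<close> 75)
  assumes scaleC_add_right: "scaleC a (x + y) = scaleC a x + scaleC a y"
    and scaleC_add_left: "scaleC (a + b) x = scaleC a x + scaleC b x"
    and scaleC_scaleC: "scaleC a (scaleC b x) = scaleC (a * b) x"
    and scaleC_one: "scaleC 1 x = x"
    and scaleR_scaleC: "scaleR r x = scaleC (complex_of_real r) x"

class complex_hilbert = complex_vector + real_normed_vector + complete_space +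
  fixes cinner :: "'a \<Rightarrow> 'a \<Rightarrow> complex"
  assumes cinner_commute: "cinner x y = cnj (cinner y x)"
    and cinner_add_left: "cinner (x + y) z = cinner x z + cinner y z"
    and cinner_scaleC_left: "cinner (scaleC a x) y = cnj a * cinner x y"
    and cinner_ge_zero: "Im (cinner x x) = 0 \<and> Re (cinner x x) \<ge> 0"
    and cinner_eq_zero_iff: "cinner x x = 0 \<longleftrightarrow> x = 0"
    and norm_eq_sqrt_cinner: "norm x = sqrt (Re (cinner x x))"

definition clinear :: "('a::complex_vector \<Rightarrow> 'b::complex_vector) \<Rightarrow> bool" where
  "clinear f \<longleftrightarrow> (\<forall>x y. f (x + y) = f x + f y) \<and> (\<forall>c x. f (scaleC c x) = scaleC c (f x))"

definition bounded_clinear ::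
  "('a::{complex_vector,real_normed_vector} \<Rightarrow> 'b::{complex_vector,real_normed_vector}) \<Rightarrow> bool" where
  "bounded_clinear f \<longleftrightarrow> clinear f \<and> (\<exists>K. \<forall>x. norm (f x) \<le> norm x * K)"

definition domA :: "('h \<Rightarrow> 'h::complex_vector) \<Rightarrow> ('e \<Rightarrow> 'h) \<Rightarrow> 'h set" where
  "domA T \<gamma> = {T f + \<gamma> \<phi> | f \<phi>. True}"

definition opA :: "('h \<Rightarrow> 'h::complex_vector) \<Rightarrow> ('e \<Rightarrow> 'h) \<Rightarrow> 'h \<Rightarrow> 'h" where
  "opA T \<gamma> u = (THE f. \<exists>\<phi>. u = T f + \<gamma> \<phi>)"

definition Gamma0 :: "('h \<Rightarrow> 'h::complex_vector) \<Rightarrow> ('e \<Rightarrow> 'h) \<Rightarrow> 'h \<Rightarrow> 'e" where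
  "Gamma0 T \<gamma> u = (THE \<phi>. \<exists>f. u = T f + \<gamma> \<phi>)"

end

theory Submission
  imports Defs
begin

lemma scaleC_zero_r: "scaleC c (0::'a::complex_vector) = 0"
  using scaleC_add_right[of c "0::'a" 0] by simp

lemma scaleC_minus_r: "scaleC c (x - y) = scaleC c x - scaleC c (y::'a::complex_vector)"
  using scaleC_add_right[of c "x - y" y] by (simp add: algebra_simps)

lemma lin_zero: "clinear f \<Longrightarrow> f 0 = 0"
  unfolding clinear_def by (metis add_cancel_right_right)

lemma lin_diff: "clinear f \<Longrightarrow> f (x - y) = f x - f y"
  unfolding clinear_def by (metis add_diff_cancel diff_add_cancel eq_diff_eq)

lemma lin_scale: "clinear f \<Longrightarrow> f (scaleC c x) = scaleC c (f x)"
  unfolding clinear_def by blast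

lemma lin_add: "clinear f \<Longrightarrow> f (x + y) = f x + f y"
  unfolding clinear_def by blast

lemma decomp_unique:
  fixes T :: "'h::complex_vector \<Rightarrow> 'h" and \<gamma> :: "'e::complex_vector \<Rightarrow> 'h"
  assumes "clinear T" "clinear \<gamma>" "{x. T x = 0} = {0}" "{x. \<gamma> x = 0} = {0}"
    "range T \<inter> range \<gamma> = {0}" "T f + \<gamma> p = T f' + \<gamma> p'"
  shows "f = f' \<and> p = p'"
proof -
  have e: "T (f - f') = \<gamma> (p' - p)"
    using assms(6) lin_diff[OF assms(1), of f f'] lin_diff[OF assms(2), of p' p]
    by (metis add_diff_cancel_left' add_diff_eq diff_add_eq diff_diff_eq2)
  hence "T (f - f') \<in> range T \<inter> range \<gamma>" by (metis IntI rangeI)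
  hence z: "T (f - f') = 0" using assms(5) by auto
  hence "f - f' = 0" using assms(3) by blast
  moreover have "p' - p = 0" using z e assms(4) by (metis (mono_tags, lifting) mem_Collect_eq singletonD)
  ultimately show ?thesis by simp
qed

theorem theorem1:
  fixes T :: "'h::complex_hilbert \<Rightarrow> 'h"
    and \<gamma> :: "'e::complex_hilbert \<Rightarrow> 'h"
    and l :: complex
    and R :: "'h \<Rightarrow> 'h"
  assumes T_bdd: "bounded_clinear T"
    and T_ker: "{x. T x = 0} = {0}"
    and \<gamma>_bdd: "bounded_clinear \<gamma>"
    and \<gamma>_ker: "{x. \<gamma> x = 0} = {0}"
    and ran_int: "range T \<inter> range \<gamma> = {0}"
    and R_bdd: "bounded_clinear R"
    and R_left: "\<And>x. R (x - l *\<^sub>C T x) = x"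
    and R_right: "\<And>x. R x - l *\<^sub>C T (R x) = x"
  shows "\<forall>f \<phi>.
           (\<exists>!u. u \<in> domA T \<gamma> \<and> opA T \<gamma> u - l *\<^sub>C u = f \<and> Gamma0 T \<gamma> u = \<phi>)
         \<and> (let u = T (R f) + R (\<gamma> \<phi>) in
              u \<in> domA T \<gamma> \<and> opA T \<gamma> u - l *\<^sub>C u = f \<and> Gamma0 T \<gamma> u = \<phi>)"
proof (intro allI)
  fix f \<phi>
  have lT: "clinear T" and lg: "clinear \<gamma>" and lR: "clinear R"
    using T_bdd \<gamma>_bdd R_bdd by (auto simp: bounded_clinear_def)
  note du = decomp_unique[OF lT lg T_ker \<gamma>_ker ran_int]
  have opA_eq: "opA T \<gamma> (T g + \<gamma> p) = g" for g p
    unfolding opA_def by (rule the_equality) (auto dest: du)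
  have G_eq: "Gamma0 T \<gamma> (T g + \<gamma> p) = p" for g p
    unfolding Gamma0_def by (rule the_equality) (auto dest: du)
  define g where "g = R f + l *\<^sub>C R (\<gamma> \<phi>)"
  have Rg: "R (\<gamma> \<phi>) = T (l *\<^sub>C R (\<gamma> \<phi>)) + \<gamma> \<phi>"
    using R_right[of "\<gamma> \<phi>"] lin_scale[OF lT] by (simp add: algebra_simps)
  have ueq: "T (R f) + R (\<gamma> \<phi>) = T g + \<gamma> \<phi>"
    unfolding g_def using Rg lin_add[OF lT] by (simp add: algebra_simps)
  have key: "g - l *\<^sub>C (T g + \<gamma> \<phi>) = f"
  proof -
    have "g - l *\<^sub>C (T g + \<gamma> \<phi>) = (R f - l *\<^sub>C T (R f))
        + l *\<^sub>C (R (\<gamma> \<phi>) - l *\<^sub>C T (R (\<gamma> \<phi>)) - \<gamma> \<phi>)"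
      unfolding g_def using lin_add[OF lT] lin_scale[OF lT]
      by (simp add: scaleC_add_right scaleC_minus_r scaleC_scaleC algebra_simps)
    also have "\<dots> = f" using R_right[of f] R_right[of "\<gamma> \<phi>"] by (simp add: scaleC_zero_r)
    finally show ?thesis .
  qed
  have sol: "T g + \<gamma> \<phi> \<in> domA T \<gamma> \<and> opA T \<gamma> (T g + \<gamma> \<phi>) - l *\<^sub>C (T g + \<gamma> \<phi>) = f
      \<and> Gamma0 T \<gamma> (T g + \<gamma> \<phi>) = \<phi>"
    using key opA_eq G_eq unfolding domA_def by auto
  have uniq: "u = T g + \<gamma> \<phi>" if uu: "u \<in> domA T \<gamma>" "opA T \<gamma> u - l *\<^sub>C u = f" "Gamma0 T \<gamma> u = \<phi>" for u
  proof -
    obtain h p where u: "u = T h + \<gamma> p" using uu(1) unfolding domA_def by blast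
    have p: "p = \<phi>" using uu(3) G_eq u by simp
    have "h - l *\<^sub>C (T h + \<gamma> \<phi>) = f" using uu(2) opA_eq u p by simp
    hence "h - l *\<^sub>C T h = f + l *\<^sub>C \<gamma> \<phi>" by (simp add: scaleC_add_right algebra_simps)
    hence "h = R (f + l *\<^sub>C \<gamma> \<phi>)" using R_left[of h] by simp
    also have "\<dots> = g" unfolding g_def using lin_add[OF lR] lin_scale[OF lR] by simp
    finally show ?thesis using u p by simp
  qed
  show "(\<exists>!u. u \<in> domA T \<gamma> \<and> opA T \<gamma> u - l *\<^sub>C u = f \<and> Gamma0 T \<gamma> u = \<phi>)
         \<and> (let u = T (R f) + R (\<gamma> \<phi>) in
              u \<in> domA T \<gamma> \<and> opA T \<gamma> u - l *\<^sub>C u = f \<and> Gamma0 T \<gamma> u = \<phi>)"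
  proof
    show "\<exists>!u. u \<in> domA T \<gamma> \<and> opA T \<gamma> u - l *\<^sub>C u = f \<and> Gamma0 T \<gamma> u = \<phi>"
      by (rule ex1I[of _ "T g + \<gamma> \<phi>"]) (use sol uniq in blast)+
    show "let u = T (R f) + R (\<gamma> \<phi>) in
              u \<in> domA T \<gamma> \<and> opA T \<gamma> u - l *\<^sub>C u = f \<and> Gamma0 T \<gamma> u = \<phi>"
      unfolding Let_def ueq by (rule sol)
  qed
qed

end
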